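(* Let $d \ge 3$ and $F \lneq F' \leq \mathrm{Sym}(\Omega)$ with $F'$ preserving each $F$-orbit in $\Omega$. Fix a vertex $v_0$ of $T_d$ and let $K(F,F')$ be the stabilizer of $v_0$ in $G(F,F')$. Then $K(F,F')$ is an ICC group, i.e. every non-trivial element of $K(F,F')$ has an infinite conjugacy class in $K(F,F')$.
   Context: $\Omega$ is a set with $|\Omega|=d$; $T_d$ is the $d$-regular tree with vertex set $V_d$ and a coloring $c$ of its edges by $\Omega$ which is bijective on the set $E(v)$ of edges at each vertex $v$; local permutations are $\sigma(g,v) = c|_{E(gv)}\circ g\circ (c|_{E(v)})^{-1}$. $G(F,F')$ is the group of automorphisms of $T_d$ whose local permutations all lie in $F'$ and all but finitely many lie in $F$. *)

theory Defs
  imports "HOL-Combinatorics.Permutations"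
begin

text \<open>Canonical model of the d-regular tree T_d with a legal edge colouring by Omega:
vertices are the reduced words over Omega (no two consecutive letters equal);
u and w are adjacent iff one is obtained from the other by appending one letter,
and the colour of that edge is the appended letter.\<close>

definition tree_verts :: "'a set \<Rightarrow> 'a list set" where
  "tree_verts \<Omega> = {w. set w \<subseteq> \<Omega> \<and> successively (\<noteq>) w}"

definition tree_adj :: "'a list \<Rightarrow> 'a list \<Rightarrow> bool" where
  "tree_adj u w \<longleftrightarrow> (\<exists>a. w = u @ [a]) \<or> (\<exists>a. u = w @ [a])"

definition edge_col :: "'a list \<Rightarrow> 'a list \<Rightarrow> 'a" where
  "edge_col u w = (if length u < length w then last w else last u)"

definition nbr :: "'a list \<Rightarrow> 'a \<Rightarrow> 'a list" where
  "nbr v a = (if v \<noteq> [] \<and> last v = a then butlast v else v @ [a])"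

definition tree_aut :: "'a set \<Rightarrow> ('a list \<Rightarrow> 'a list) set" where
  "tree_aut \<Omega> = {g. g permutes tree_verts \<Omega> \<and>
      (\<forall>u\<in>tree_verts \<Omega>. \<forall>w\<in>tree_verts \<Omega>. tree_adj (g u) (g w) \<longleftrightarrow> tree_adj u w)}"

text \<open>Local permutation sigma(g,v) = c|E(gv) o g o (c|E(v))^-1, extended by the identity
outside Omega.\<close>
definition local_perm :: "'a set \<Rightarrow> ('a list \<Rightarrow> 'a list) \<Rightarrow> 'a list \<Rightarrow> 'a \<Rightarrow> 'a" where
  "local_perm \<Omega> g v a = (if a \<in> \<Omega> then edge_col (g v) (g (nbr v a)) else a)"

definition perm_subgroup :: "'a set \<Rightarrow> ('a \<Rightarrow> 'a) set \<Rightarrow> bool" where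
  "perm_subgroup \<Omega> F \<longleftrightarrow> (\<forall>p\<in>F. p permutes \<Omega>) \<and> id \<in> F \<and>
      (\<forall>p\<in>F. \<forall>q\<in>F. p \<circ> q \<in> F) \<and> (\<forall>p\<in>F. inv p \<in> F)"

definition G_grp :: "'a set \<Rightarrow> ('a \<Rightarrow> 'a) set \<Rightarrow> ('a \<Rightarrow> 'a) set \<Rightarrow> ('a list \<Rightarrow> 'a list) set" where
  "G_grp \<Omega> F F' = {g \<in> tree_aut \<Omega>.
      (\<forall>v\<in>tree_verts \<Omega>. local_perm \<Omega> g v \<in> F') \<and>
      finite {v \<in> tree_verts \<Omega>. local_perm \<Omega> g v \<notin> F}}"

definition K_grp :: "'a set \<Rightarrow> ('a \<Rightarrow> 'a) set \<Rightarrow> ('a \<Rightarrow> 'a) set \<Rightarrow> 'a list \<Rightarrow> ('a list \<Rightarrow> 'a list) set" where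
  "K_grp \<Omega> F F' v0 = {g \<in> G_grp \<Omega> F F'. g v0 = v0}"

definition ICC :: "('b \<Rightarrow> 'b) set \<Rightarrow> bool" where
  "ICC H \<longleftrightarrow> (\<forall>k\<in>H. k \<noteq> id \<longrightarrow> infinite {h \<circ> k \<circ> inv h | h. h \<in> H})"

end

theory Submission
  imports Defs
begin



abbreviation "V \<Omega> \<equiv> tree_verts \<Omega>"

lemma V_snoc: "w @ [a] \<in> V \<Omega> \<longleftrightarrow> w \<in> V \<Omega> \<and> a \<in> \<Omega> \<and> (w = [] \<or> last w \<noteq> a)"
  by (auto simp: tree_verts_def successively_append_iff)

lemma V_butlast: "w \<in> V \<Omega> \<Longrightarrow> butlast w \<in> V \<Omega>"
  by (cases w rule: rev_cases) (auto simp: V_snoc)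

lemma nbr_V: "v \<in> V \<Omega> \<Longrightarrow> a \<in> \<Omega> \<Longrightarrow> nbr v a \<in> V \<Omega>"
  by (auto simp: nbr_def V_butlast V_snoc)

lemma edge_col_nbr: "edge_col v (nbr v a) = a"
  by (cases v rule: rev_cases) (auto simp: nbr_def edge_col_def)

lemma adj_nbr: "tree_adj v (nbr v a)"
  by (cases v rule: rev_cases) (auto simp: nbr_def tree_adj_def)

lemma adj_iff: "v \<in> V \<Omega> \<Longrightarrow> w \<in> V \<Omega> \<Longrightarrow> tree_adj v w \<longleftrightarrow> (\<exists>a\<in>\<Omega>. w = nbr v a)"
proof
  assume v: "v \<in> V \<Omega>" and w: "w \<in> V \<Omega>" and "tree_adj v w"
  then consider a where "w = v @ [a]" | a where "v = w @ [a]" by (auto simp: tree_adj_def)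
  then show "\<exists>a\<in>\<Omega>. w = nbr v a"
  proof cases
    case (1 a) then show ?thesis using w by (auto simp: V_snoc nbr_def)
  next
    case (2 a) then show ?thesis using v by (auto simp: V_snoc nbr_def)
  qed
qed (auto simp: adj_nbr)

lemma nbr_inj: "nbr v a = nbr v b \<Longrightarrow> a = b"
  by (metis edge_col_nbr)

lemma aut_V: "g \<in> tree_aut \<Omega> \<Longrightarrow> g v \<in> V \<Omega> \<longleftrightarrow> v \<in> V \<Omega>"
proof -
  assume "g \<in> tree_aut \<Omega>"
  then have "g permutes V \<Omega>" unfolding tree_aut_def by blast
  then show ?thesis by (rule permutes_in_image)
qed

lemma aut_nbr:
  assumes g: "g \<in> tree_aut \<Omega>" and v: "v \<in> V \<Omega>" and a: "a \<in> \<Omega>"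
  shows "g (nbr v a) = nbr (g v) (local_perm \<Omega> g v a) \<and> local_perm \<Omega> g v a \<in> \<Omega>"
proof -
  have n: "nbr v a \<in> V \<Omega>" by (rule nbr_V[OF v a])
  have "tree_adj (g v) (g (nbr v a)) \<longleftrightarrow> tree_adj v (nbr v a)"
    using g v n unfolding tree_aut_def by blast
  then have ad: "tree_adj (g v) (g (nbr v a))" using adj_nbr[of v a] by simp
  have gv: "g v \<in> V \<Omega>" "g (nbr v a) \<in> V \<Omega>" using aut_V[OF g] v n by blast+
  obtain b where b: "b \<in> \<Omega>" "g (nbr v a) = nbr (g v) b"
    using adj_iff[OF gv] ad by blast
  have "local_perm \<Omega> g v a = b" using a b by (simp add: local_perm_def edge_col_nbr)
  then show ?thesis using b by simp
qed

lemma lp_out: "a \<notin> \<Omega> \<Longrightarrow> local_perm \<Omega> g v a = a"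
  by (simp add: local_perm_def)

lemma lp_id: "local_perm \<Omega> id v = id"
  by (auto simp: local_perm_def edge_col_nbr)

lemma aut_adj: "g \<in> tree_aut \<Omega> \<Longrightarrow> u \<in> V \<Omega> \<Longrightarrow> w \<in> V \<Omega> \<Longrightarrow> tree_adj (g u) (g w) \<longleftrightarrow> tree_adj u w"
  unfolding tree_aut_def by blast

lemma aut_perm: "g \<in> tree_aut \<Omega> \<Longrightarrow> g permutes V \<Omega>"
  unfolding tree_aut_def by blast

lemma aut_intro: "g permutes V \<Omega> \<Longrightarrow> (\<And>u w. u \<in> V \<Omega> \<Longrightarrow> w \<in> V \<Omega> \<Longrightarrow> tree_adj (g u) (g w) \<longleftrightarrow> tree_adj u w) \<Longrightarrow> g \<in> tree_aut \<Omega>"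
  unfolding tree_aut_def by blast

lemma aut_comp: assumes g: "g \<in> tree_aut \<Omega>" and k: "k \<in> tree_aut \<Omega>" shows "g \<circ> k \<in> tree_aut \<Omega>"
proof (rule aut_intro)
  show "(g \<circ> k) permutes V \<Omega>" by (rule permutes_compose[OF aut_perm[OF k] aut_perm[OF g]])
  fix u w assume u: "u \<in> V \<Omega>" and w: "w \<in> V \<Omega>"
  have "k u \<in> V \<Omega>" "k w \<in> V \<Omega>" using aut_V[OF k] u w by blast+
  then show "tree_adj ((g \<circ> k) u) ((g \<circ> k) w) \<longleftrightarrow> tree_adj u w"
    using aut_adj[OF g] aut_adj[OF k u w] by simp
qed

lemma aut_inv: assumes g: "g \<in> tree_aut \<Omega>" shows "inv g \<in> tree_aut \<Omega>"
proof -
  have p: "g permutes V \<Omega>" using g by (rule aut_perm)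
  have "tree_adj (inv g u) (inv g w) \<longleftrightarrow> tree_adj u w" if "u \<in> V \<Omega>" "w \<in> V \<Omega>" for u w
  proof -
    have "inv g u \<in> V \<Omega>" "inv g w \<in> V \<Omega>" using that permutes_in_image[OF permutes_inv[OF p]] by auto
    then have "tree_adj (g (inv g u)) (g (inv g w)) \<longleftrightarrow> tree_adj (inv g u) (inv g w)"
      using aut_adj[OF g] by blast
    then show ?thesis using p by (simp add: permutes_inverses)
  qed
  then show ?thesis using permutes_inv[OF p] by (intro aut_intro) blast+
qed

lemma lp_comp:
  assumes g: "g \<in> tree_aut \<Omega>" and k: "k \<in> tree_aut \<Omega>" and v: "v \<in> V \<Omega>"
  shows "local_perm \<Omega> (g \<circ> k) v = local_perm \<Omega> g (k v) \<circ> local_perm \<Omega> k v"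
proof
  fix a show "local_perm \<Omega> (g \<circ> k) v a = (local_perm \<Omega> g (k v) \<circ> local_perm \<Omega> k v) a"
  proof (cases "a \<in> \<Omega>")
    case True
    from aut_nbr[OF k v True] have "k (nbr v a) = nbr (k v) (local_perm \<Omega> k v a)" "local_perm \<Omega> k v a \<in> \<Omega>" by auto
    then show ?thesis using True by (simp add: local_perm_def)
  qed (simp add: lp_out)
qed

lemma lp_inv:
  assumes g: "g \<in> tree_aut \<Omega>" and v: "v \<in> V \<Omega>"
  shows "local_perm \<Omega> g (inv g v) \<circ> local_perm \<Omega> (inv g) v = id"
proof -
  have p: "g permutes V \<Omega>" using g by (rule aut_perm)
  have "local_perm \<Omega> (g \<circ> inv g) v = local_perm \<Omega> g (inv g v) \<circ> local_perm \<Omega> (inv g) v"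
    using lp_comp[OF g aut_inv[OF g] v] by simp
  then show ?thesis using permutes_inv_o[OF p] lp_id by metis
qed




lemma mk_aut:
  assumes out: "\<forall>x. x \<notin> V \<Omega> \<longrightarrow> h x = x" and img: "h ` V \<Omega> \<subseteq> V \<Omega>" and inj: "inj_on h (V \<Omega>)"
    and nil: "h [] = []"
    and loc: "\<forall>v\<in>V \<Omega>. q v permutes \<Omega> \<and> (\<forall>a\<in>\<Omega>. h (nbr v a) = nbr (h v) (q v a))"
  shows "h \<in> tree_aut \<Omega> \<and> (\<forall>v\<in>V \<Omega>. local_perm \<Omega> h v = q v)"
proof -
  have surj: "w \<in> V \<Omega> \<longrightarrow> w \<in> h ` V \<Omega>" for w
  proof (induction w rule: rev_induct)
    case Nil
    have "[] \<in> V \<Omega>" by (simp add: tree_verts_def)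
    then show ?case using nil by force
  next
    case (snoc a w)
    show ?case
    proof
      assume wa: "w @ [a] \<in> V \<Omega>"
      then have w: "w \<in> V \<Omega>" and a: "a \<in> \<Omega>" and nl: "w = [] \<or> last w \<noteq> a" by (auto simp: V_snoc)
      then obtain x where x: "x \<in> V \<Omega>" "w = h x" using snoc by auto
      have qp: "q x permutes \<Omega>" using loc x by auto
      have "a \<in> q x ` \<Omega>" using permutes_image[OF qp] a by simp
      then obtain b where b: "b \<in> \<Omega>" "q x b = a" by blast
      have "h (nbr x b) = nbr w a" using loc x b by auto
      also have "\<dots> = w @ [a]" using nl by (auto simp: nbr_def)
      finally show "w @ [a] \<in> h ` V \<Omega>" using nbr_V[OF x(1) b(1)] by (metis image_eqI)
    qed
  qed
  have bij: "bij_betw h (V \<Omega>) (V \<Omega>)" unfolding bij_betw_def using img inj surj by blast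
  have perm: "h permutes V \<Omega>" by (rule bij_imp_permutes[OF bij]) (use out in auto)
  have adj: "tree_adj (h v) (h w) \<longleftrightarrow> tree_adj v w" if v: "v \<in> V \<Omega>" and w: "w \<in> V \<Omega>" for v w
  proof -
    have hv: "h v \<in> V \<Omega>" "h w \<in> V \<Omega>" using img v w by auto
    have qp: "q v permutes \<Omega>" using loc v by auto
    have "(\<exists>a\<in>\<Omega>. h w = nbr (h v) a) \<longleftrightarrow> (\<exists>a\<in>\<Omega>. w = nbr v a)"
    proof
      assume "\<exists>a\<in>\<Omega>. h w = nbr (h v) a"
      then obtain a where a: "a \<in> \<Omega>" "h w = nbr (h v) a" by auto
      have "a \<in> q v ` \<Omega>" using permutes_image[OF qp] a by simp
      then obtain b where b: "b \<in> \<Omega>" "q v b = a" by blast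
      have "h w = h (nbr v b)" using loc v b a by auto
      then have "w = nbr v b" using inj w nbr_V[OF v b(1)] by (auto dest: inj_onD)
      then show "\<exists>a\<in>\<Omega>. w = nbr v a" using b by auto
    next
      assume "\<exists>a\<in>\<Omega>. w = nbr v a"
      then obtain a where a: "a \<in> \<Omega>" "w = nbr v a" by auto
      have "h w = nbr (h v) (q v a)" using loc v a by auto
      moreover have "q v a \<in> \<Omega>" using qp a by (simp add: permutes_in_image)
      ultimately show "\<exists>a\<in>\<Omega>. h w = nbr (h v) a" by blast
    qed
    then show ?thesis using adj_iff[OF v w] adj_iff[OF hv] by simp
  qed
  have lp: "local_perm \<Omega> h v = q v" if v: "v \<in> V \<Omega>" for v
  proof
    fix a
    have qp: "q v permutes \<Omega>" using loc v by auto
    show "local_perm \<Omega> h v a = q v a"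
    proof (cases "a \<in> \<Omega>")
      case True then show ?thesis using loc v by (simp add: local_perm_def edge_col_nbr)
    next
      case False then show ?thesis using qp by (simp add: local_perm_def permutes_not_in)
    qed
  qed
  have "h \<in> tree_aut \<Omega>" by (rule aut_intro[OF perm adj])
  with lp show ?thesis by blast
qed

lemma V_pre: "u @ (b # y) \<in> V \<Omega> \<longleftrightarrow> u \<in> V \<Omega> \<and> b \<in> \<Omega> \<and> set y \<subseteq> \<Omega> \<and> (u = [] \<or> last u \<noteq> b) \<and> successively (\<noteq>) (b # y)"
  by (auto simp: tree_verts_def successively_append_iff)

lemma snoc_pre: "v @ [a] = u @ (b # y) \<Longrightarrow> \<exists>z. v = u @ z"
  by (metis butlast_append butlast_snoc list.distinct(1))

context
  fixes \<Omega> :: "'a set" and u :: "'a list" and p :: "'a \<Rightarrow> 'a" and f :: "'a \<Rightarrow> 'a \<Rightarrow> 'a"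
  assumes uV: "u \<in> V \<Omega>" and un: "u \<noteq> []" and pP: "p permutes \<Omega>" and pfix: "p (last u) = last u"
    and fF: "\<forall>b\<in>\<Omega>. f b permutes \<Omega> \<and> f b b = p b"
begin

definition hh :: "'a list \<Rightarrow> 'a list" where
  "hh w = (if w \<in> V \<Omega> \<and> (\<exists>b y. w = u @ (b # y)) then u @ map (f (w ! length u)) (drop (length u) w) else w)"

lemma hh_pre: "u @ (b # y) \<in> V \<Omega> \<Longrightarrow> hh (u @ (b # y)) = u @ map (f b) (b # y)"
  unfolding hh_def by auto

lemma hh_other: "\<not> (\<exists>b y. w = u @ (b # y)) \<Longrightarrow> hh w = w"
  unfolding hh_def by auto

lemma hh_notV: "w \<notin> V \<Omega> \<Longrightarrow> hh w = w"
  unfolding hh_def by auto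

lemma hh_short: "length w \<le> length u \<Longrightarrow> hh w = w"
  by (rule hh_other) auto

lemma pre_img_V:
  assumes "u @ (b # y) \<in> V \<Omega>" shows "u @ map (f b) (b # y) \<in> V \<Omega>"
proof -
  from assms have b: "b \<in> \<Omega>" and y: "set y \<subseteq> \<Omega>" and lb: "last u \<noteq> b" and s: "successively (\<noteq>) (b # y)"
    using un by (auto simp: V_pre)
  have fb: "f b permutes \<Omega>" "f b b = p b" using fF b by auto
  have "p b \<noteq> last u" using lb pfix pP by (metis permutes_inj injD)
  moreover have "set (map (f b) y) \<subseteq> \<Omega>" using y fb by (auto simp: permutes_in_image)
  moreover have "successively (\<noteq>) (map (f b) (b # y))"
    unfolding successively_map using s
    by (rule successively_mono) (metis fb(1) permutes_inj injD)
  moreover have "p b \<in> \<Omega>" using pP b by (simp add: permutes_in_image)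
  ultimately show ?thesis using uV fb b by (auto simp: V_pre permutes_in_image successively_map)
qed

lemma hh_V: assumes w: "w \<in> V \<Omega>" shows "hh w \<in> V \<Omega>"
proof (cases "\<exists>b y. w = u @ (b # y)")
  case True
  then obtain b y where wb: "w = u @ (b # y)" by blast
  show ?thesis using w wb hh_pre[of b y] pre_img_V[of b y] by simp
next
  case False then show ?thesis using w hh_other[of w] by simp
qed

lemma hh_inj: "inj_on hh (V \<Omega>)"
proof (rule inj_onI)
  fix x w assume x: "x \<in> V \<Omega>" and w: "w \<in> V \<Omega>" and e: "hh x = hh w"
  show "x = w"
  proof (cases "\<exists>b y. x = u @ (b # y)")
    case True
    then obtain b y where xb: "x = u @ (b # y)" by auto
    show ?thesis
    proof (cases "\<exists>b y. w = u @ (b # y)")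
      case True
      then obtain c z where wc: "w = u @ (c # z)" by auto
      have bc: "b \<in> \<Omega>" "c \<in> \<Omega>" "set y \<subseteq> \<Omega>" "set z \<subseteq> \<Omega>" using x w xb wc by (auto simp: V_pre)
      from e have "map (f b) (b # y) = map (f c) (c # z)" using x w xb wc by (simp add: hh_pre)
      then have 1: "f b b = f c c" and 2: "map (f b) y = map (f c) z" by auto
      then have "p b = p c" using fF bc by auto
      then have "b = c" using pP by (metis permutes_inj injD)
      moreover have "inj (f b)" using fF bc(1) permutes_inj by blast
      ultimately have "y = z" using 2 by (simp add: inj_map_eq_map)
      then show ?thesis using xb wc \<open>b = c\<close> by simp
    next
      case False
      then have hw: "hh w = w" by (rule hh_other)
      have "hh x = u @ (f b b # map (f b) y)" using x xb hh_pre by simp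
      then have "w = u @ (f b b # map (f b) y)" using e hw by simp
      then show ?thesis using False by blast
    qed
  next
    case False
    then have hx: "hh x = x" by (rule hh_other)
    show ?thesis
    proof (cases "\<exists>b y. w = u @ (b # y)")
      case True
      then obtain c z where wc: "w = u @ (c # z)" by auto
      then show ?thesis using e hx w False by (simp add: hh_pre)
    next
      case False then show ?thesis using hx e hh_other[of w] by simp
    qed
  qed
qed

definition qq :: "'a list \<Rightarrow> 'a \<Rightarrow> 'a" where
  "qq v = (if \<exists>b y. v = u @ (b # y) then f (v ! length u) else if v = u then p else id)"

lemma hh_nbr_A:
  assumes v: "v \<in> V \<Omega>" and a: "a \<in> \<Omega>" and vb: "v = u @ (b # y)"
  shows "hh (nbr v a) = nbr (hh v) (qq v a)"
proof -
  have b: "b \<in> \<Omega>" and y: "set y \<subseteq> \<Omega>" using v vb by (auto simp: V_pre)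
  have fb: "f b permutes \<Omega>" "f b b = p b" using fF b by auto
  have ifb: "inj (f b)" using fb(1) by (rule permutes_inj)
  have q: "qq v a = f b a" using vb by (simp add: qq_def)
  have hv: "hh v = u @ map (f b) (b # y)" using v vb hh_pre by simp
  have lv: "last v = last (b # y)" using vb by simp
  have lhv: "last (hh v) = f b (last (b # y))"
  proof (cases y)
    case Nil then show ?thesis using hv by simp
  next
    case (Cons c z) then show ?thesis using hv by (simp add: last_map)
  qed
  show ?thesis
  proof (cases "last (b # y) = a")
    case True
    have n: "nbr v a = butlast v" using lv True vb by (simp add: nbr_def)
    have n2: "nbr (hh v) (qq v a) = butlast (hh v)" using lhv True q hv by (simp add: nbr_def)
    show ?thesis
    proof (cases "y = []")
      case True
      have "butlast v = u" using vb True by simp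
      moreover have "butlast (hh v) = u" using hv True by simp
      ultimately show ?thesis using n n2 hh_short[of u] by simp
    next
      case False
      have bv: "butlast v = u @ (b # butlast y)" using vb False by (simp add: butlast_append)
      have "u @ (b # butlast y) \<in> V \<Omega>" using V_butlast[OF v] bv by simp
      then have "hh (butlast v) = u @ map (f b) (b # butlast y)" using bv hh_pre by simp
      moreover have "butlast (hh v) = u @ map (f b) (b # butlast y)"
        using hv False by (simp add: butlast_append map_butlast)
      ultimately show ?thesis using n n2 by simp
    qed
  next
    case False
    have "nbr v a = v @ [a]" using False lv by (simp add: nbr_def)
    then have n: "nbr v a = u @ (b # (y @ [a]))" using vb by simp
    have "nbr v a \<in> V \<Omega>" by (rule nbr_V[OF v a])
    then have "hh (nbr v a) = u @ map (f b) (b # y @ [a])" using n hh_pre by simp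
    then have h1: "hh (nbr v a) = hh v @ [f b a]" using hv by simp
    have "f b (last (b # y)) \<noteq> f b a" using False ifb by (simp add: inj_eq)
    then have "nbr (hh v) (f b a) = hh v @ [f b a]" using lhv by (simp add: nbr_def)
    then show ?thesis using h1 q by simp
  qed
qed

lemma hh_nbr_BC:
  assumes v: "v \<in> V \<Omega>" and a: "a \<in> \<Omega>" and nf: "\<not> (\<exists>b y. v = u @ (b # y))"
  shows "hh (nbr v a) = nbr (hh v) (qq v a)"
proof -
  show ?thesis
  proof (cases "v = u")
    case True
    have q: "qq v = p" unfolding qq_def using nf True by (simp only: if_False if_True simp_thms)
    have hu: "hh u = u" by (rule hh_short) simp
    show ?thesis
    proof (cases "a = last u")
      case True
      have n1: "nbr u a = butlast u" using True un by (simp add: nbr_def)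
      have pa: "p a = a" using True pfix by simp
      have "hh (butlast u) = butlast u" by (rule hh_short) simp
      then show ?thesis using n1 pa q hu \<open>v = u\<close> by simp
    next
      case False
      have pa: "p a \<noteq> last u" using False pfix pP by (metis permutes_inj injD)
      have n1: "nbr u a = u @ [a]" using False by (simp add: nbr_def)
      have n2: "nbr u (p a) = u @ [p a]" using pa by (simp add: nbr_def)
      have "u @ [a] \<in> V \<Omega>" using uV a False by (simp add: V_snoc)
      then have "hh (u @ [a]) = u @ [f a a]" using hh_pre[of a "[]"] by simp
      also have "f a a = p a" using fF a by blast
      finally show ?thesis using n1 n2 q hu \<open>v = u\<close> by simp
    qed
  next
    case False
    have q: "qq v = id" unfolding qq_def using nf False by (simp only: if_False simp_thms)
    have hv: "hh v = v" using nf by (rule hh_other)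
    have nz: "\<not> (\<exists>z. v = u @ z)"
    proof
      assume "\<exists>z. v = u @ z"
      then obtain z where vz: "v = u @ z" by blast
      show False
      proof (cases z)
        case Nil then have "v = u" using vz by simp
        then show False using False by contradiction
      next
        case (Cons c w) then have "v = u @ (c # w)" using vz by simp
        then show False using nf by blast
      qed
    qed
    have "\<not> (\<exists>b y. nbr v a = u @ (b # y))"
    proof
      assume "\<exists>b y. nbr v a = u @ (b # y)"
      then obtain b y where e: "nbr v a = u @ (b # y)" by auto
      show False
      proof (cases "v \<noteq> [] \<and> last v = a")
        case True
        then have bl: "butlast v = u @ (b # y)" using e by (simp add: nbr_def)
        from True have "v = butlast v @ [last v]" by (metis append_butlast_last_id)
        also have "\<dots> = u @ (b # y @ [a])" using bl True by simp
        finally have "v = u @ (b # y @ [a])" .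
        then show False using nz by blast
      next
        case False
        then have "v @ [a] = u @ (b # y)" using e unfolding nbr_def by (auto split: if_splits)
        from snoc_pre[OF this] nz show False by blast
      qed
    qed
    then have "hh (nbr v a) = nbr v a" by (rule hh_other)
    then show ?thesis using hv q by simp
  qed
qed

lemma hh_nbr:
  assumes v: "v \<in> V \<Omega>" and a: "a \<in> \<Omega>"
  shows "hh (nbr v a) = nbr (hh v) (qq v a)"
  using hh_nbr_A[OF v a] hh_nbr_BC[OF v a] by blast


lemma hh_main:
  "hh \<in> tree_aut \<Omega> \<and> (\<forall>v\<in>V \<Omega>. local_perm \<Omega> hh v = qq v)"
proof (rule mk_aut)
  show "\<forall>x. x \<notin> V \<Omega> \<longrightarrow> hh x = x" using hh_notV by auto
  show "hh ` V \<Omega> \<subseteq> V \<Omega>" using hh_V by auto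
  show "inj_on hh (V \<Omega>)" by (rule hh_inj)
  show "hh [] = []" by (rule hh_short) simp
  show "\<forall>v\<in>V \<Omega>. qq v permutes \<Omega> \<and> (\<forall>a\<in>\<Omega>. hh (nbr v a) = nbr (hh v) (qq v a))"
  proof
    fix v assume v: "v \<in> V \<Omega>"
    have "qq v permutes \<Omega>"
    proof (cases "\<exists>b y. v = u @ (b # y)")
      case True
      then obtain b y where vb: "v = u @ (b # y)" by blast
      then have b: "b \<in> \<Omega>" using v by (simp add: V_pre)
      have "qq v = f b" using vb by (simp add: qq_def)
      then show ?thesis using fF b by simp
    next
      case False
      show ?thesis
      proof (cases "v = u")
        case True then have "qq v = p" unfolding qq_def using False by (simp only: if_False if_True simp_thms)
        then show ?thesis using pP by simp
      next
        case F2: False then have "qq v = id" unfolding qq_def using False by (simp only: if_False simp_thms)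
        then show ?thesis by (simp add: permutes_id)
      qed
    qed
    then show "qq v permutes \<Omega> \<and> (\<forall>a\<in>\<Omega>. hh (nbr v a) = nbr (hh v) (qq v a))" using hh_nbr v by auto
  qed
qed


lemma hh_construct_ex:
  "\<exists>h. h \<in> tree_aut \<Omega> \<and> h u = u \<and> (\<forall>w. length w \<le> length u \<longrightarrow> h w = w) \<and>
    local_perm \<Omega> h u = p \<and> (\<forall>v\<in>V \<Omega>. v \<noteq> u \<longrightarrow> local_perm \<Omega> h v = id \<or> (\<exists>b\<in>\<Omega>. local_perm \<Omega> h v = f b))"
proof -
  have m: "hh \<in> tree_aut \<Omega> \<and> (\<forall>v\<in>V \<Omega>. local_perm \<Omega> hh v = qq v)"
    by (rule hh_main)
  have sh: "\<forall>w. length w \<le> length u \<longrightarrow> hh w = w"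
    using hh_short by blast
  have nu: "\<not> (\<exists>b y. u = u @ (b # y))" by simp
  have "qq u = p" unfolding qq_def using nu by (simp only: if_False if_True simp_thms)
  then have lu: "local_perm \<Omega> hh u = p" using m uV by simp
  have other: "local_perm \<Omega> hh v = id \<or> (\<exists>b\<in>\<Omega>. local_perm \<Omega> hh v = f b)" if v: "v \<in> V \<Omega>" "v \<noteq> u" for v
  proof (cases "\<exists>b y. v = u @ (b # y)")
    case True
    then obtain b y where vb: "v = u @ (b # y)" by blast
    then have b: "b \<in> \<Omega>" using v by (simp add: V_pre)
    have "qq v = f b" using vb by (simp add: qq_def)
    moreover have "local_perm \<Omega> hh v = qq v" using m v by blast
    ultimately have "local_perm \<Omega> hh v = f b" by simp
    then show ?thesis using b by blast
  next
    case False
    have "qq v = id" unfolding qq_def using False v(2) by (simp only: if_False simp_thms)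
    moreover have "local_perm \<Omega> hh v = qq v" using m v by blast
    ultimately show ?thesis by simp
  qed
  have hu: "hh u = u" using sh by simp
  show ?thesis
    apply (rule exI[of _ hh])
    using m sh lu other hu by blast
qed

end



lemma common_nbr:
  assumes "tree_adj z (w @ [a])" "tree_adj z (w @ [b])" "a \<noteq> b"
  shows "z = w"
proof -
  from assms(1) consider c where "w @ [a] = z @ [c]" | c where "z = (w @ [a]) @ [c]"
    unfolding tree_adj_def by blast
  then show ?thesis
  proof cases
    case (1 c) then show ?thesis by simp
  next
    case (2 c)
    from assms(2) consider d where "w @ [b] = z @ [d]" | d where "z = (w @ [b]) @ [d]"
      unfolding tree_adj_def by blast
    then show ?thesis
    proof cases
      case (1 d)
      then have "length (w @ [b]) = length (z @ [d])" by simp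
      then show ?thesis using 2 by simp
    next
      case (2 d)
      with \<open>z = (w @ [a]) @ [c]\<close> have "a = b" by simp
      then show ?thesis using assms(3) by contradiction
    qed
  qed
qed

lemma moved_child:
  assumes g: "g \<in> tree_aut \<Omega>" and fin: "finite \<Omega>" and c3: "card \<Omega> \<ge> 3"
    and w: "w \<in> V \<Omega>" and gw: "g w \<noteq> w"
  shows "\<exists>a. w @ [a] \<in> V \<Omega> \<and> g (w @ [a]) \<noteq> w @ [a]"
proof (rule ccontr)
  assume H: "\<not> ?thesis"
  let ?C = "\<Omega> - {last w}"
  have "card ?C \<ge> 2" using c3 fin by (auto simp add: card_Diff_singleton_if)
  then obtain a where a: "a \<in> ?C" by (metis all_not_in_conv card.empty not_numeral_le_zero)
  have "card (?C - {a}) \<ge> 1" using \<open>card ?C \<ge> 2\<close> a fin by (simp add: card_Diff_singleton_if)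
  then obtain b where b: "b \<in> ?C - {a}" by (metis all_not_in_conv card.empty not_one_le_zero)
  have va: "w @ [a] \<in> V \<Omega>" using a w by (auto simp add: V_snoc)
  have vb: "w @ [b] \<in> V \<Omega>" using b w by (auto simp add: V_snoc)
  have fa: "g (w @ [a]) = w @ [a]" using H va by blast
  have fb: "g (w @ [b]) = w @ [b]" using H vb by blast
  have "tree_adj w (w @ [a])" by (simp add: tree_adj_def)
  then have "tree_adj (g w) (g (w @ [a]))" using aut_adj[OF g w va] by simp
  then have 1: "tree_adj (g w) (w @ [a])" using fa by simp
  have "tree_adj w (w @ [b])" by (simp add: tree_adj_def)
  then have "tree_adj (g w) (g (w @ [b]))" using aut_adj[OF g w vb] by simp
  then have 2: "tree_adj (g w) (w @ [b])" using fb by simp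
  have "a \<noteq> b" using b by blast
  from common_nbr[OF 1 2 this] show False using gw by contradiction
qed

lemma moved_infinite:
  assumes g: "g \<in> tree_aut \<Omega>" and fin: "finite \<Omega>" and c3: "card \<Omega> \<ge> 3" and ne: "g \<noteq> id"
  shows "infinite {w \<in> V \<Omega>. g w \<noteq> w}"
proof
  assume F: "finite {w \<in> V \<Omega>. g w \<noteq> w}"
  obtain x where x: "g x \<noteq> x" using ne by (metis eq_id_iff)
  have xV: "x \<in> V \<Omega>"
  proof (rule ccontr)
    assume "x \<notin> V \<Omega>"
    then have "g x = x" using aut_perm[OF g] by (rule permutes_not_in[rotated])
    then show False using x by contradiction
  qed
  have ex: "\<exists>w. w \<in> V \<Omega> \<and> g w \<noteq> w \<and> length w \<ge> n" for n
  proof (induction n)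
    case 0 then show ?case using xV x by blast
  next
    case (Suc n)
    then obtain w where w: "w \<in> V \<Omega>" "g w \<noteq> w" "length w \<ge> n" by blast
    from moved_child[OF g fin c3 w(1) w(2)] obtain a where "w @ [a] \<in> V \<Omega>" "g (w @ [a]) \<noteq> w @ [a]" by blast
    moreover have "length (w @ [a]) \<ge> Suc n" using w(3) by simp
    ultimately show ?case by blast
  qed
  have "finite (length ` {w \<in> V \<Omega>. g w \<noteq> w})" using F by (rule finite_imageI)
  then obtain N where N: "\<forall>l \<in> length ` {w \<in> V \<Omega>. g w \<noteq> w}. l \<le> N"
    using finite_nat_set_iff_bounded_le by blast
  obtain w where w: "w \<in> V \<Omega>" "g w \<noteq> w" "length w \<ge> Suc N" using ex by blast
  then have "length w \<le> N" using N by blast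
  then show False using w(3) by simp
qed

lemma psg_perm: "perm_subgroup \<Omega> F \<Longrightarrow> q \<in> F \<Longrightarrow> q permutes \<Omega>"
  unfolding perm_subgroup_def by blast
lemma psg_id: "perm_subgroup \<Omega> F \<Longrightarrow> id \<in> F"
  unfolding perm_subgroup_def by blast
lemma psg_comp: "perm_subgroup \<Omega> F \<Longrightarrow> q \<in> F \<Longrightarrow> r \<in> F \<Longrightarrow> q \<circ> r \<in> F"
  unfolding perm_subgroup_def by blast
lemma psg_inv: "perm_subgroup \<Omega> F \<Longrightarrow> q \<in> F \<Longrightarrow> inv q \<in> F"
  unfolding perm_subgroup_def by blast

lemma grp1:
  assumes F: "perm_subgroup \<Omega> F" and yx: "Y \<circ> X = id" and Y: "Y \<in> F" shows "X \<in> F"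
proof -
  have "inv Y \<circ> Y = id" using permutes_inv_o(2)[OF psg_perm[OF F Y]] .
  then have "X = inv Y" using yx by (metis comp_assoc comp_id id_comp)
  then show ?thesis using psg_inv[OF F Y] by simp
qed

lemma grp2:
  assumes F: "perm_subgroup \<Omega> F" and yx: "Y \<circ> X = id" and X: "X \<in> F" shows "Y \<in> F"
proof -
  have "X \<circ> inv X = id" using permutes_inv_o(1)[OF psg_perm[OF F X]] .
  then have "Y = inv X" using yx by (metis comp_assoc comp_id id_comp)
  then show ?thesis using psg_inv[OF F X] by simp
qed

lemma grp3:
  assumes F: "perm_subgroup \<Omega> F" and A: "A \<in> F" and B: "B \<in> F" and ABX: "A \<circ> B \<circ> X \<in> F" shows "X \<in> F"
proof -
  have ia: "inv A \<circ> A = id" using permutes_inv_o(2)[OF psg_perm[OF F A]] .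
  have ib: "inv B \<circ> B = id" using permutes_inv_o(2)[OF psg_perm[OF F B]] .
  have "inv B \<circ> (inv A \<circ> (A \<circ> B \<circ> X)) = X"
    by (simp add: comp_assoc[symmetric] ia ib)
  moreover have "inv B \<circ> (inv A \<circ> (A \<circ> B \<circ> X)) \<in> F"
    using psg_comp[OF F psg_inv[OF F B] psg_comp[OF F psg_inv[OF F A] ABX]] .
  ultimately show ?thesis by simp
qed




lemma conj_lp:
  assumes g: "g \<in> tree_aut \<Omega>" and k: "k \<in> tree_aut \<Omega>" and v: "v \<in> V \<Omega>"
  shows "local_perm \<Omega> (g \<circ> k \<circ> inv g) v =
    local_perm \<Omega> g (k (inv g v)) \<circ> local_perm \<Omega> k (inv g v) \<circ> local_perm \<Omega> (inv g) v"
proof -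
  have ig: "inv g \<in> tree_aut \<Omega>" by (rule aut_inv[OF g])
  have e1: "local_perm \<Omega> (g \<circ> (k \<circ> inv g)) v = local_perm \<Omega> g ((k \<circ> inv g) v) \<circ> local_perm \<Omega> (k \<circ> inv g) v"
    by (rule lp_comp[OF g aut_comp[OF k ig] v])
  have e2: "local_perm \<Omega> (k \<circ> inv g) v = local_perm \<Omega> k (inv g v) \<circ> local_perm \<Omega> (inv g) v"
    by (rule lp_comp[OF k ig v])
  have e3: "g \<circ> k \<circ> inv g = g \<circ> (k \<circ> inv g)" by (rule comp_assoc)
  show ?thesis unfolding e3 e1 e2 by (simp only: comp_assoc o_apply)
qed

lemma key_conj:
  assumes F: "perm_subgroup \<Omega> F" and k: "k \<in> tree_aut \<Omega>" and u: "u \<in> V \<Omega>" and ku: "k u \<noteq> u"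
    and lku: "local_perm \<Omega> k u \<in> F" and Sk: "finite {v \<in> V \<Omega>. local_perm \<Omega> k v \<notin> F}"
    and h: "h \<in> tree_aut \<Omega>" and hu: "h u = u" and lhu: "local_perm \<Omega> h u \<notin> F"
    and lho: "\<forall>v\<in>V \<Omega>. v \<noteq> u \<longrightarrow> local_perm \<Omega> h v \<in> F"
  shows "u \<in> {v \<in> V \<Omega>. local_perm \<Omega> (h \<circ> k \<circ> inv h) v \<notin> F} \<and>
         finite {v \<in> V \<Omega>. local_perm \<Omega> (h \<circ> k \<circ> inv h) v \<notin> F}"
proof -
  have ph: "h permutes V \<Omega>" by (rule aut_perm[OF h])
  have pk: "k permutes V \<Omega>" by (rule aut_perm[OF k])
  have ihu: "inv h u = u" using permutes_inv_eq[OF ph] hu by blast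
  have kuV: "k u \<in> V \<Omega>" using aut_V[OF k] u by blast
  have l1: "local_perm \<Omega> (h \<circ> k \<circ> inv h) u = local_perm \<Omega> h (k u) \<circ> local_perm \<Omega> k u \<circ> local_perm \<Omega> (inv h) u"
    using conj_lp[OF h k u] ihu by simp
  have A: "local_perm \<Omega> h (k u) \<in> F" using lho kuV ku by blast
  have part1: "local_perm \<Omega> (h \<circ> k \<circ> inv h) u \<notin> F"
  proof
    assume "local_perm \<Omega> (h \<circ> k \<circ> inv h) u \<in> F"
    then have "local_perm \<Omega> h (k u) \<circ> local_perm \<Omega> k u \<circ> local_perm \<Omega> (inv h) u \<in> F" using l1 by simp
    from grp3[OF F A lku this] have X: "local_perm \<Omega> (inv h) u \<in> F" .
    have "local_perm \<Omega> h u \<circ> local_perm \<Omega> (inv h) u = id" using lp_inv[OF h u] ihu by simp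
    from grp2[OF F this X] show False using lhu by contradiction
  qed
  have sub: "{v \<in> V \<Omega>. local_perm \<Omega> (h \<circ> k \<circ> inv h) v \<notin> F} \<subseteq>
      h ` ({v \<in> V \<Omega>. local_perm \<Omega> k v \<notin> F} \<union> {u, inv k u})"
  proof
    fix v assume "v \<in> {v \<in> V \<Omega>. local_perm \<Omega> (h \<circ> k \<circ> inv h) v \<notin> F}"
    then have v: "v \<in> V \<Omega>" and nF: "local_perm \<Omega> (h \<circ> k \<circ> inv h) v \<notin> F" by auto
    define x where "x = inv h v"
    have xV: "x \<in> V \<Omega>" unfolding x_def using permutes_in_image[OF permutes_inv[OF ph]] v by blast
    have vx: "v = h x" unfolding x_def using permutes_inverses(1)[OF ph] by simp
    have "x \<in> {v \<in> V \<Omega>. local_perm \<Omega> k v \<notin> F} \<union> {u, inv k u}"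
    proof (rule ccontr)
      assume "\<not> ?thesis"
      then have x1: "local_perm \<Omega> k x \<in> F" and x2: "x \<noteq> u" and x3: "x \<noteq> inv k u" using xV by auto
      have kx: "k x \<noteq> u"
      proof
        assume "k x = u"
        then have "inv k u = x" using permutes_inv_eq[OF pk] by blast
        then show False using x3 by simp
      qed
      have kxV: "k x \<in> V \<Omega>" using aut_V[OF k] xV by blast
      have a1: "local_perm \<Omega> h (k x) \<in> F" using lho kxV kx by blast
      have a2: "local_perm \<Omega> h x \<in> F" using lho xV x2 by blast
      have "local_perm \<Omega> h x \<circ> local_perm \<Omega> (inv h) v = id" using lp_inv[OF h v] x_def by simp
      from grp1[OF F this a2] have a3: "local_perm \<Omega> (inv h) v \<in> F" .
      have "local_perm \<Omega> (h \<circ> k \<circ> inv h) v = local_perm \<Omega> h (k x) \<circ> local_perm \<Omega> k x \<circ> local_perm \<Omega> (inv h) v"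
        using conj_lp[OF h k v] x_def by simp
      moreover have "local_perm \<Omega> h (k x) \<circ> local_perm \<Omega> k x \<circ> local_perm \<Omega> (inv h) v \<in> F"
        using psg_comp[OF F psg_comp[OF F a1 x1] a3] .
      ultimately show False using nF by simp
    qed
    then show "v \<in> h ` ({v \<in> V \<Omega>. local_perm \<Omega> k v \<notin> F} \<union> {u, inv k u})" using vx by blast
  qed
  have "finite (h ` ({v \<in> V \<Omega>. local_perm \<Omega> k v \<notin> F} \<union> {u, inv k u}))" using Sk by simp
  then have "finite {v \<in> V \<Omega>. local_perm \<Omega> (h \<circ> k \<circ> inv h) v \<notin> F}" using sub by (rule finite_subset[rotated])
  then show ?thesis using part1 u by blast
qed




theorem proposition3:
  fixes \<Omega> :: "'a set" and F F' :: "('a \<Rightarrow> 'a) set" and v0 :: "'a list"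
  assumes "finite \<Omega>" and "card \<Omega> \<ge> 3"
    and "perm_subgroup \<Omega> F" and "perm_subgroup \<Omega> F'" and "F \<subset> F'"
    and "\<forall>p\<in>F'. \<forall>x\<in>\<Omega>. \<exists>f\<in>F. f x = p x"
    and "v0 \<in> tree_verts \<Omega>"
  shows "ICC (K_grp \<Omega> F F' v0)"
proof -
  note fin = assms(1) and c3 = assms(2) and PF = assms(3) and PF' = assms(4) and FF' = assms(5)
    and orb = assms(6) and v0 = assms(7)
  have FsubF': "F \<subseteq> F'" using FF' by blast
  obtain p0 where p0: "p0 \<in> F'" "p0 \<notin> F" using FF' by blast
  let ?K = "K_grp \<Omega> F F' v0"
  let ?S = "\<lambda>g. {v \<in> V \<Omega>. local_perm \<Omega> g v \<notin> F}"
  show ?thesis unfolding ICC_def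
  proof (intro ballI impI)
    fix k assume kK: "k \<in> ?K" and kid: "k \<noteq> id"
    from kK have kG: "k \<in> G_grp \<Omega> F F' \<and> k v0 = v0" unfolding K_grp_def by (rule CollectD)
    then have kv0: "k v0 = v0" by (rule conjunct2)
    from kG have "k \<in> G_grp \<Omega> F F'" by (rule conjunct1)
    then have "k \<in> tree_aut \<Omega> \<and> (\<forall>v\<in>V \<Omega>. local_perm \<Omega> k v \<in> F') \<and> finite (?S k)"
      unfolding G_grp_def by (rule CollectD)
    then have k: "k \<in> tree_aut \<Omega>" and kF': "\<forall>v\<in>V \<Omega>. local_perm \<Omega> k v \<in> F'"
      and Sk: "finite (?S k)" by (rule conjunct1, rule conjunct1[OF conjunct2], rule conjunct2[OF conjunct2])
    define M where "M = {w \<in> V \<Omega>. k w \<noteq> w}"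
    define B where "B = {w. set w \<subseteq> \<Omega> \<and> length w \<le> length v0}"
    define U where "U = M - ?S k - B"
    have Minf: "infinite M" unfolding M_def by (rule moved_infinite[OF k fin c3 kid])
    have Bfin: "finite B" unfolding B_def by (rule finite_lists_length_le[OF fin])
    have Uinf: "infinite U" unfolding U_def
      using Diff_infinite_finite[OF Bfin Diff_infinite_finite[OF Sk Minf]] .
    have ex: "\<exists>h. h \<in> ?K \<and> u \<in> ?S (h \<circ> k \<circ> inv h) \<and> finite (?S (h \<circ> k \<circ> inv h))" if uU: "u \<in> U" for u
    proof -
      have uV: "u \<in> V \<Omega>" and ku: "k u \<noteq> u" and lku: "local_perm \<Omega> k u \<in> F" and uB: "u \<notin> B"
        using uU unfolding U_def M_def by auto
      have su: "set u \<subseteq> \<Omega>" using uV by (simp add: tree_verts_def)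
      have lu: "length v0 < length u" using uB su unfolding B_def by simp
      have un: "u \<noteq> []" using lu by auto
      define c where "c = last u"
      have cO: "c \<in> \<Omega>" unfolding c_def using su un last_in_set by blast
      obtain f0 where f0: "f0 \<in> F" "f0 c = p0 c" using orb p0(1) cO by blast
      have f0P: "f0 permutes \<Omega>" by (rule psg_perm[OF PF f0(1)])
      define p where "p = inv f0 \<circ> p0"
      have pF': "p \<in> F'" unfolding p_def
        using psg_comp[OF PF' psg_inv[OF PF'] p0(1)] f0(1) FsubF' by blast
      have pnF: "p \<notin> F"
      proof
        assume "p \<in> F"
        then have "f0 \<circ> p \<in> F" using psg_comp[OF PF f0(1)] by blast
        moreover have "f0 \<circ> p = p0" unfolding p_def
          using permutes_inv_o(1)[OF f0P] by (simp add: comp_assoc[symmetric])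
        ultimately show False using p0(2) by simp
      qed
      have pP: "p permutes \<Omega>" by (rule psg_perm[OF PF' pF'])
      have "p c = inv f0 (p0 c)" unfolding p_def by simp
      also have "\<dots> = inv f0 (f0 c)" using f0(2) by simp
      also have "\<dots> = c" by (rule permutes_inverses(2)[OF f0P])
      finally have pfix: "p (last u) = last u" unfolding c_def .
      define f where "f = (\<lambda>b. SOME g. g \<in> F \<and> g b = p b)"
      have fb: "f b \<in> F \<and> f b b = p b" if b: "b \<in> \<Omega>" for b
      proof -
        have "\<exists>g. g \<in> F \<and> g b = p b" using orb pF' b by blast
        then show ?thesis unfolding f_def by (rule someI_ex)
      qed
      have fF: "\<forall>b\<in>\<Omega>. f b permutes \<Omega> \<and> f b b = p b"
        using fb psg_perm[OF PF] by blast
      obtain h where h: "h \<in> tree_aut \<Omega>" and hu: "h u = u" and hs: "\<forall>w. length w \<le> length u \<longrightarrow> h w = w"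
        and hlu: "local_perm \<Omega> h u = p"
        and ho: "\<forall>v\<in>V \<Omega>. v \<noteq> u \<longrightarrow> local_perm \<Omega> h v = id \<or> (\<exists>b\<in>\<Omega>. local_perm \<Omega> h v = f b)"
        using hh_construct_ex[OF uV un pP pfix fF] by blast
      have lho: "\<forall>v\<in>V \<Omega>. v \<noteq> u \<longrightarrow> local_perm \<Omega> h v \<in> F"
      proof (intro ballI impI)
        fix v assume "v \<in> V \<Omega>" "v \<noteq> u"
        then have "local_perm \<Omega> h v = id \<or> (\<exists>b\<in>\<Omega>. local_perm \<Omega> h v = f b)" using ho by blast
        then show "local_perm \<Omega> h v \<in> F"
        proof
          assume "local_perm \<Omega> h v = id" then show ?thesis using psg_id[OF PF] by simp
        next
          assume "\<exists>b\<in>\<Omega>. local_perm \<Omega> h v = f b"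
          then obtain b where "b \<in> \<Omega>" "local_perm \<Omega> h v = f b" by blast
          then show ?thesis using fb by simp
        qed
      qed
      have hF': "\<forall>v\<in>V \<Omega>. local_perm \<Omega> h v \<in> F'"
      proof
        fix v assume v: "v \<in> V \<Omega>"
        show "local_perm \<Omega> h v \<in> F'"
        proof (cases "v = u")
          case True then show ?thesis using hlu pF' by simp
        next
          case False then show ?thesis using lho v FsubF' by blast
        qed
      qed
      have "?S h \<subseteq> {u}" using lho by blast
      then have hfin: "finite (?S h)" by (rule finite_subset) simp
      have hv0: "h v0 = v0" using hs lu by simp
      have hK: "h \<in> ?K" unfolding K_grp_def G_grp_def by (intro CollectI conjI h hF' hfin hv0)
      have "u \<in> ?S (h \<circ> k \<circ> inv h) \<and> finite (?S (h \<circ> k \<circ> inv h))"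
        by (rule key_conj[OF PF k uV ku lku Sk h hu]) (use hlu pnF lho in auto)
      then show ?thesis using hK by blast
    qed
    then have "\<forall>u\<in>U. \<exists>h. h \<in> ?K \<and> u \<in> ?S (h \<circ> k \<circ> inv h) \<and> finite (?S (h \<circ> k \<circ> inv h))" by blast
    from bchoice[OF this] obtain H where H: "\<forall>u\<in>U. H u \<in> ?K \<and> u \<in> ?S (H u \<circ> k \<circ> inv (H u)) \<and> finite (?S (H u \<circ> k \<circ> inv (H u)))"
      by blast
    show "infinite {h \<circ> k \<circ> inv h |h. h \<in> ?K}"
    proof
      assume fcl: "finite {h \<circ> k \<circ> inv h |h. h \<in> ?K}"
      define T where "T = (\<lambda>u. H u \<circ> k \<circ> inv (H u)) ` U"
      have "T \<subseteq> {h \<circ> k \<circ> inv h |h. h \<in> ?K}" unfolding T_def using H by blast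
      then have Tfin: "finite T" using fcl by (rule finite_subset)
      have "U \<subseteq> (\<Union>t\<in>T. ?S t)" unfolding T_def using H by blast
      moreover have "finite (\<Union>t\<in>T. ?S t)"
      proof (rule finite_UN_I[OF Tfin])
        fix t assume "t \<in> T"
        then show "finite (?S t)" unfolding T_def using H by blast
      qed
      ultimately have "finite U" by (rule finite_subset)
      then show False using Uinf by contradiction
    qed
  qed
qed



end
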